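(* Let $G=(V,E)$ be a connected undirected graph, where $E$ is a set of unordered pairs of distinct vertices. Consider the following two linear programs. (LR), with variables $d_{ij}$ for $i,j\in V$: $$\min_{d}\ \sum_{(i,j)\in E} d_{ij}\quad\text{s.t.}\quad \sum_{i\in V}\sum_{j\in V} d_{ij}\ge 1,\qquad d_{ij}\le d_{ik}+d_{kj}\ \ \forall\, i,j,k\in V\text{ distinct},$$ $$d_{ij}=d_{ji}\ge 0\ \ \forall i,j\in V,\qquad d_{ii}=0\ \ \forall i\in V.$$ (LR\_OL), with variables $b_{ij}$ for $i,j\in V$: $$\min_{b}\ \sum_{(i,j)\in E} b_{ij}\quad\text{s.t.}\quad \sum_{i\in V}\sum_{j\in V} b_{ij}\ge 1,\qquad b_{ij}\le b_{ik}+b_{kj}\ \ \forall\, i,j,k\in V\text{ distinct with }(i,k)\in E,$$ $$b_{ij}=b_{ji}\ge 0\ \ \forall i,j\in V,\qquad b_{ii}=0\ \ \forall i\in V.$$ Let $d^*$ be an optimal solution of (LR) with optimal value $z_{d^*}=\sum_{(i,j)\in E} d^*_{ij}$, and let $b^*$ be an optimal solution of (LR\_OL) with optimal value $z_{b^*}=\sum_{(i,j)\in E} b^*_{ij}$. Then $z_{b^*}=z_{d^*}$. Moreover, from any optimal solution $b^*$ of (LR\_OL) one can construct a feasible solution $d'$ of (LR) (namely $d'_{ij}$ = the shortest-path distance from $i$ to $j$ in $G$ with edge weights $w_{uv}=b^*_{uv}$ for $(u,v)\in E$) such that $d'_{ij}\ge b^*_{ij}$ for all $i,j\in V$ and $d'_{ij}=b^*_{ij}$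 for all $(i,j)\in E$; in particular $d'$ is optimal for (LR).
   Context: In the sums over $(i,j)\in E$, each edge of $E$ is counted via the corresponding variable $d_{ij}$ (resp. $b_{ij}$), these variables being symmetric. A path from $i$ to $j$ in $G$ is a sequence of vertices $i=v_0,\dots,v_m=j$ with $(v_r,v_{r+1})\in E$; its weight is the sum of the edge weights along it. *)

theory Defs
  imports Main "HOL-Library.Multiset" Complex_Main
begin

text \<open>Graph representation: a finite vertex set V and an edge set E of ordered
pairs, in which every undirected edge {i,j} is listed exactly once (either as
(i,j) or as (j,i)). Thus a sum over (i,j) in E counts every edge once, through
the (symmetric) variable d i j.\<close>

definition adj :: "('a \<times> 'a) set \<Rightarrow> 'a \<Rightarrow> 'a \<Rightarrow> bool" where
  "adj E u v \<longleftrightarrow> (u, v) \<in> E \<or> (v, u) \<in> E"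

definition simple_graph :: "'a set \<Rightarrow> ('a \<times> 'a) set \<Rightarrow> bool" where
  "simple_graph V E \<longleftrightarrow> finite V \<and> E \<subseteq> V \<times> V
     \<and> (\<forall>(i, j) \<in> E. i \<noteq> j \<and> (j, i) \<notin> E)"

definition is_walk :: "('a \<times> 'a) set \<Rightarrow> 'a \<Rightarrow> 'a \<Rightarrow> 'a list \<Rightarrow> bool" where
  "is_walk E i j ps \<longleftrightarrow> ps \<noteq> [] \<and> hd ps = i \<and> last ps = j
     \<and> (\<forall>r < length ps - 1. adj E (ps ! r) (ps ! Suc r))"

definition walk_weight :: "('a \<Rightarrow> 'a \<Rightarrow> real) \<Rightarrow> 'a list \<Rightarrow> real" where
  "walk_weight w ps = (\<Sum>r < length ps - 1. w (ps ! r) (ps ! Suc r))"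

definition connected_graph :: "'a set \<Rightarrow> ('a \<times> 'a) set \<Rightarrow> bool" where
  "connected_graph V E \<longleftrightarrow> (\<forall>i \<in> V. \<forall>j \<in> V. \<exists>ps. is_walk E i j ps)"

definition sp_dist :: "('a \<times> 'a) set \<Rightarrow> ('a \<Rightarrow> 'a \<Rightarrow> real) \<Rightarrow> 'a \<Rightarrow> 'a \<Rightarrow> real" where
  "sp_dist E w i j = Inf {walk_weight w ps | ps. is_walk E i j ps}"

definition edge_obj :: "('a \<times> 'a) set \<Rightarrow> ('a \<Rightarrow> 'a \<Rightarrow> real) \<Rightarrow> real" where
  "edge_obj E d = (\<Sum>(i, j) \<in> E. d i j)"

definition LR_feasible :: "'a set \<Rightarrow> ('a \<times> 'a) set \<Rightarrow> ('a \<Rightarrow> 'a \<Rightarrow> real) \<Rightarrow> bool" where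
  "LR_feasible V E d \<longleftrightarrow>
     (\<Sum>i \<in> V. \<Sum>j \<in> V. d i j) \<ge> 1
   \<and> (\<forall>i \<in> V. \<forall>j \<in> V. \<forall>k \<in> V. i \<noteq> j \<and> i \<noteq> k \<and> j \<noteq> k \<longrightarrow> d i j \<le> d i k + d k j)
   \<and> (\<forall>i \<in> V. \<forall>j \<in> V. d i j = d j i \<and> d i j \<ge> 0)
   \<and> (\<forall>i \<in> V. d i i = 0)"

definition LR_OL_feasible :: "'a set \<Rightarrow> ('a \<times> 'a) set \<Rightarrow> ('a \<Rightarrow> 'a \<Rightarrow> real) \<Rightarrow> bool" where
  "LR_OL_feasible V E b \<longleftrightarrow>
     (\<Sum>i \<in> V. \<Sum>j \<in> V. b i j) \<ge> 1
   \<and> (\<forall>i \<in> V. \<forall>j \<in> V. \<forall>k \<in> V. i \<noteq> j \<and> i \<noteq> k \<and> j \<noteq> k \<and> adj E i k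
        \<longrightarrow> b i j \<le> b i k + b k j)
   \<and> (\<forall>i \<in> V. \<forall>j \<in> V. b i j = b j i \<and> b i j \<ge> 0)
   \<and> (\<forall>i \<in> V. b i i = 0)"

definition LR_optimal :: "'a set \<Rightarrow> ('a \<times> 'a) set \<Rightarrow> ('a \<Rightarrow> 'a \<Rightarrow> real) \<Rightarrow> bool" where
  "LR_optimal V E d \<longleftrightarrow> LR_feasible V E d
     \<and> (\<forall>d'. LR_feasible V E d' \<longrightarrow> edge_obj E d \<le> edge_obj E d')"

definition LR_OL_optimal :: "'a set \<Rightarrow> ('a \<times> 'a) set \<Rightarrow> ('a \<Rightarrow> 'a \<Rightarrow> real) \<Rightarrow> bool" where
  "LR_OL_optimal V E b \<longleftrightarrow> LR_OL_feasible V E b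
     \<and> (\<forall>b'. LR_OL_feasible V E b' \<longrightarrow> edge_obj E b \<le> edge_obj E b')"

end

theory Submission
  imports Defs
begin

lemma ww_cons2: "walk_weight w (x # y # r) = w x y + walk_weight w (y # r)"
  unfolding walk_weight_def by (simp add: sum.lessThan_Suc_shift del: sum.lessThan_Suc)

lemma ww_single: "walk_weight w [x] = 0"
  unfolding walk_weight_def by simp

lemma iw_single: "is_walk E i j [x] \<longleftrightarrow> x = i \<and> x = j"
  unfolding is_walk_def by auto

lemma iw_cons2: "is_walk E i j (x # y # r) \<longleftrightarrow> x = i \<and> adj E x y \<and> is_walk E y j (y # r)"
proof -
  have "(\<forall>k < Suc (length r). adj E ((x#y#r) ! k) ((x#y#r) ! Suc k)) \<longleftrightarrow>
        adj E x y \<and> (\<forall>k < length r. adj E ((y#r) ! k) ((y#r) ! Suc k))"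
    by (simp add: All_less_Suc2 del: All_less_Suc)
  then show ?thesis unfolding is_walk_def by auto
qed

lemma adj_sym: "adj E u v \<Longrightarrow> adj E v u" unfolding adj_def by auto

lemma walk_in_V:
  assumes "simple_graph V E" "is_walk E i j p" "i \<in> V"
  shows "set p \<subseteq> V"
  using assms(2,3)
proof (induction p arbitrary: i)
  case Nil then show ?case by (simp add: is_walk_def)
next
  case (Cons x r)
  show ?case
  proof (cases r)
    case Nil then show ?thesis using Cons by (simp add: iw_single)
  next
    case (Cons y r')
    have "x = i" "adj E x y" "is_walk E y j (y # r')" using Cons \<open>is_walk E i j (x # r)\<close> by (auto simp: iw_cons2)
    moreover have "y \<in> V" using \<open>adj E x y\<close> assms(1) unfolding adj_def simple_graph_def by auto
    ultimately show ?thesis using Cons.IH Cons Cons.prems by auto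
  qed
qed

lemma walk_append:
  assumes "is_walk E i k p" "is_walk E k j q"
  shows "is_walk E i j (p @ tl q) \<and> walk_weight w (p @ tl q) = walk_weight w p + walk_weight w q"
  using assms(1)
proof (induction p arbitrary: i)
  case Nil then show ?case by (simp add: is_walk_def)
next
  case (Cons x r)
  show ?case
  proof (cases r)
    case Nil
    then have "x = i" "x = k" using Cons.prems by (auto simp: iw_single)
    moreover have "q = k # tl q" using assms(2) unfolding is_walk_def by (cases q) auto
    ultimately show ?thesis using Nil assms(2) ww_single by (metis append_Cons append_Nil add_0)
  next
    case (Cons y r')
    have h: "x = i" "adj E x y" "is_walk E y k (y # r')" using Cons \<open>is_walk E i k (x # r)\<close> by (auto simp: iw_cons2)
    from Cons.IH[OF h(3)[folded Cons]] have ih: "is_walk E y j (r @ tl q)"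
      "walk_weight w (r @ tl q) = walk_weight w r + walk_weight w q" by auto
    have e: "(x # r) @ tl q = x # y # (r' @ tl q)" using Cons by simp
    show ?thesis unfolding e using ih h Cons by (simp add: iw_cons2 ww_cons2)
  qed
qed

lemma walk_rev:
  assumes "is_walk E i j p" and sym: "\<forall>u\<in>set p. \<forall>v\<in>set p. w u v = w v u"
  shows "is_walk E j i (rev p) \<and> walk_weight w (rev p) = walk_weight w p"
  using assms
proof (induction p arbitrary: i)
  case Nil then show ?case by (simp add: is_walk_def)
next
  case (Cons x r)
  show ?case
  proof (cases r)
    case Nil
    then have "is_walk E i j [x]" using Cons.prems(1) by simp
    then have "x = i \<and> x = j" by (metis iw_single)
    then have xi: "x = i" and ij: "i = j" by blast+
    show ?thesis using Nil unfolding xi ij by (simp add: iw_single)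
  next
    case (Cons y r')
    have h: "x = i" "adj E x y" "is_walk E y j (y # r')" using Cons \<open>is_walk E i j (x # r)\<close> by (auto simp: iw_cons2)
    have s: "\<forall>u\<in>set r. \<forall>v\<in>set r. w u v = w v u" using Cons.prems(2) by (meson list.set_intros(2))
    from Cons.IH[OF h(3)[folded Cons] s] have ih: "is_walk E j y (rev r)"
      "walk_weight w (rev r) = walk_weight w r" by blast+
    have e2: "is_walk E y i [y, x]" using h by (simp add: iw_cons2 iw_single adj_sym)
    from walk_append[OF ih(1) e2, of w] have
      "is_walk E j i (rev r @ [x]) \<and> walk_weight w (rev r @ [x]) = walk_weight w (rev r) + walk_weight w [y, x]"
      by simp
    moreover have "w y x = w x y"
    proof -
      have "x \<in> set (x # r)" "y \<in> set (x # r)" using Cons by auto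
      then show ?thesis using Cons.prems(2) by metis
    qed
    ultimately show ?thesis using ih Cons by (simp add: ww_cons2 ww_single)
  qed
qed

lemma walk_nonneg:
  assumes "simple_graph V E" "is_walk E i j p" "i \<in> V"
    and nn: "\<forall>u\<in>V. \<forall>v\<in>V. w u v \<ge> 0"
  shows "walk_weight w p \<ge> 0"
  using assms(2,3)
proof (induction p arbitrary: i)
  case Nil then show ?case by (simp add: is_walk_def)
next
  case (Cons x r)
  show ?case
  proof (cases r)
    case Nil then show ?thesis by (simp add: ww_single)
  next
    case (Cons y r')
    have h: "x = i" "adj E x y" "is_walk E y j (y # r')" using Cons \<open>is_walk E i j (x # r)\<close> by (auto simp: iw_cons2)
    have "y \<in> V" using h(2) assms(1) unfolding adj_def simple_graph_def by auto
    then have "walk_weight w (y # r') \<ge> 0" using Cons.IH h(3) Cons by auto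
    moreover have "w x y \<ge> 0" using nn \<open>y \<in> V\<close> Cons.prems h by auto
    ultimately show ?thesis using Cons by (simp add: ww_cons2)
  qed
qed

lemma walk_ge_b:
  assumes "simple_graph V E" "LR_OL_feasible V E b" "is_walk E i j p" "i \<in> V"
  shows "b i j \<le> walk_weight b p"
  using assms(3,4)
proof (induction p arbitrary: i)
  case Nil then show ?case by (simp add: is_walk_def)
next
  case (Cons x r)
  have bf: "\<forall>i \<in> V. \<forall>j \<in> V. \<forall>k \<in> V. i \<noteq> j \<and> i \<noteq> k \<and> j \<noteq> k \<and> adj E i k
        \<longrightarrow> b i j \<le> b i k + b k j" "\<forall>i \<in> V. \<forall>j \<in> V. b i j = b j i \<and> b i j \<ge> 0"
    "\<forall>i \<in> V. b i i = 0" using assms(2) unfolding LR_OL_feasible_def by auto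
  show ?case
  proof (cases r)
    case Nil then show ?thesis using Cons.prems bf by (auto simp add: ww_single iw_single)
  next
    case (Cons y r')
    have h: "x = i" "adj E x y" "is_walk E y j (y # r')" using Cons \<open>is_walk E i j (x # r)\<close> by (auto simp: iw_cons2)
    have yV: "y \<in> V" using h(2) assms(1) unfolding adj_def simple_graph_def by auto
    have xy: "x \<noteq> y" using h(2) assms(1) unfolding adj_def simple_graph_def by auto
    have jV: "j \<in> V" using walk_in_V[OF assms(1) \<open>is_walk E i j (x # r)\<close> Cons.prems(2)]
      \<open>is_walk E i j (x # r)\<close> unfolding is_walk_def by (metis last_in_set subsetD)
    have ih: "b y j \<le> walk_weight b (y # r')" using Cons.IH h(3) Cons yV by auto
    have wnn: "walk_weight b (y # r') \<ge> 0"
      using walk_nonneg[OF assms(1) h(3) yV] bf(2) by auto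
    have "b i j \<le> b i y + b y j"
    proof (cases "i = j")
      case True then show ?thesis using bf jV yV by auto
    next
      case False
      show ?thesis
      proof (cases "y = j")
        case True then show ?thesis using bf jV by auto
      next
        case False
        then show ?thesis using bf(1) \<open>i \<noteq> j\<close> xy h jV yV Cons.prems(2) by auto
      qed
    qed
    then show ?thesis using ih h Cons by (simp add: ww_cons2)
  qed
qed

lemma LR_imp_OL: "LR_feasible V E d \<Longrightarrow> LR_OL_feasible V E d"
  unfolding LR_feasible_def LR_OL_feasible_def by auto

theorem mainTheorem1:
  fixes V :: "'a set" and E :: "('a \<times> 'a) set"
    and dstar bstar :: "'a \<Rightarrow> 'a \<Rightarrow> real"
  assumes "simple_graph V E"
    and "connected_graph V E"
    and "LR_optimal V E dstar"
    and "LR_OL_optimal V E bstar"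
  shows "edge_obj E bstar = edge_obj E dstar
    \<and> (let d' = sp_dist E bstar in
         LR_feasible V E d'
       \<and> (\<forall>i \<in> V. \<forall>j \<in> V. d' i j \<ge> bstar i j)
       \<and> (\<forall>(i, j) \<in> E. d' i j = bstar i j)
       \<and> LR_optimal V E d')"
proof -
  let ?b = bstar
  define d' where "d' = sp_dist E bstar"
  have bf: "LR_OL_feasible V E ?b" using assms(4) unfolding LR_OL_optimal_def by auto
  have bsym: "\<forall>i \<in> V. \<forall>j \<in> V. ?b i j = ?b j i \<and> ?b i j \<ge> 0" and bsum: "(\<Sum>i \<in> V. \<Sum>j \<in> V. ?b i j) \<ge> 1"
    using bf unfolding LR_OL_feasible_def by auto
  have fin: "finite V" using assms(1) unfolding simple_graph_def by auto
  have ne: "\<exists>ps. is_walk E i j ps" if "i \<in> V" "j \<in> V" for i j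
    using assms(2) that unfolding connected_graph_def by auto
  have bdd: "bdd_below {walk_weight ?b ps | ps. is_walk E i j ps}" if "i \<in> V" for i j
    using walk_nonneg[OF assms(1) _ that] bsym unfolding bdd_below_def by fastforce
  have le: "d' i j \<le> walk_weight ?b p" if "i \<in> V" "is_walk E i j p" for i j p
    unfolding d'_def sp_dist_def by (rule cInf_lower) (use that bdd in auto)
  have ge: "c \<le> d' i j" if "i \<in> V" "j \<in> V" "\<And>p. is_walk E i j p \<Longrightarrow> c \<le> walk_weight ?b p" for i j c
    unfolding d'_def sp_dist_def by (rule cInf_greatest) (use that ne in auto)
  have dge: "d' i j \<ge> ?b i j" if "i \<in> V" "j \<in> V" for i j
    using ge[OF that] walk_ge_b[OF assms(1) bf _ that(1)] by auto
  have dnn: "d' i j \<ge> 0" if "i \<in> V" "j \<in> V" for i j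
    using ge[OF that] walk_nonneg[OF assms(1) _ that(1)] bsym by auto
  have dE: "d' i j = ?b i j" if "(i, j) \<in> E" for i j
  proof -
    have V: "i \<in> V" "j \<in> V" using that assms(1) unfolding simple_graph_def by auto
    have "is_walk E i j [i, j]" using that by (simp add: iw_cons2 iw_single adj_def)
    then have "d' i j \<le> walk_weight ?b [i, j]" by (rule le[OF V(1)])
    then have "d' i j \<le> ?b i j" by (simp add: ww_cons2 ww_single)
    then show ?thesis using dge[OF V] by auto
  qed
  have dii: "d' i i = 0" if "i \<in> V" for i
    using le[OF that, of i "[i]"] dnn[OF that that] by (simp add: iw_single ww_single)
  have dsym: "d' i j = d' j i" if "i \<in> V" "j \<in> V" for i j
  proof -
    have "d' j i \<le> d' i j" if "i \<in> V" "j \<in> V" for i j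
    proof (rule ge[OF that])
      fix p assume p: "is_walk E i j p"
      have "set p \<subseteq> V" using walk_in_V[OF assms(1) p that(1)] .
      then have "\<forall>u\<in>set p. \<forall>v\<in>set p. ?b u v = ?b v u" using bsym by blast
      then have "is_walk E j i (rev p) \<and> walk_weight ?b (rev p) = walk_weight ?b p"
        by (rule walk_rev[OF p])
      then show "d' j i \<le> walk_weight ?b p" using le[OF that(2)] by metis
    qed
    then show ?thesis using that by (meson order_antisym)
  qed
  have dtri: "d' i j \<le> d' i k + d' k j" if V3: "i \<in> V" "j \<in> V" "k \<in> V" for i j k
  proof -
    have "d' i j - walk_weight ?b q \<le> d' i k" if q: "is_walk E k j q" for q
    proof (rule ge)
      fix p assume p: "is_walk E i k p"
      from walk_append[OF p q, of ?b] le[OF \<open>i \<in> V\<close>, of j "p @ tl q"]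
      show "d' i j - walk_weight ?b q \<le> walk_weight ?b p" by auto
    qed (use V3 in auto)
    then have "d' i j - d' i k \<le> d' k j"
      using ge[OF V3(3) V3(2)] by (smt (verit))
    then show ?thesis by simp
  qed
  have dsum: "(\<Sum>i \<in> V. \<Sum>j \<in> V. d' i j) \<ge> 1"
  proof -
    have "(\<Sum>i \<in> V. \<Sum>j \<in> V. ?b i j) \<le> (\<Sum>i \<in> V. \<Sum>j \<in> V. d' i j)"
      by (intro sum_mono) (use dge in auto)
    then show ?thesis using bsum by simp
  qed
  have dfeas: "LR_feasible V E d'"
    unfolding LR_feasible_def using dsum dtri dsym dnn dii by auto
  have objeq: "edge_obj E d' = edge_obj E ?b"
    unfolding edge_obj_def by (intro sum.cong) (use dE in auto)
  have lb: "edge_obj E ?b \<le> edge_obj E d" if "LR_feasible V E d" for d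
    using assms(4) LR_imp_OL[OF that] unfolding LR_OL_optimal_def by auto
  have dopt: "LR_optimal V E d'"
    unfolding LR_optimal_def using dfeas lb objeq by auto
  have ds: "LR_feasible V E dstar" "edge_obj E dstar \<le> edge_obj E d'"
    using assms(3) dfeas unfolding LR_optimal_def by auto
  have "edge_obj E ?b = edge_obj E dstar" using lb[OF ds(1)] ds(2) objeq by auto
  then show ?thesis unfolding Let_def d'_def[symmetric] using dfeas dge dE dopt by auto
qed

end
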